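(* Let $S,W$ be random variables on $\mathcal S\times\mathcal W$ with joint law $P_{SW}$ and marginals $P_S,P_W$, and assume $P_{SW}\ll P_SP_W$; write $L:=\frac{\mathrm dP_{SW}}{\mathrm d(P_SP_W)}$. Let $E\subseteq\mathcal S\times\mathcal W$ be measurable, and for $w\in\mathcal W$ let $E_w:=\{s:(s,w)\in E\}$. Let $\psi,\varphi$ be Orlicz functions. Then for every $\gamma\in\mathbb R$, $$P_{SW}(E)\le \gamma\,(P_SP_W)(E)+\Big\Vert\, w\mapsto\big\Vert\mathds 1_{E_w}\big\Vert^{P_S}_{\varphi}\Big\Vert^{P_W}_{\psi}\cdot\Big\Vert\, w\mapsto\big\Vert [L(\cdot,w)-\gamma]_+\big\Vert^{A,P_S}_{\varphi^\star}\Big\Vert^{A,P_W}_{\psi^\star}.$$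
   Context: An Orlicz function is a convex $\psi:[0,\infty)\to[0,\infty]$ with $\psi(0)=0$ that is not identically $0$ or identically $\infty$ on $(0,\infty)$; its conjugate is $\psi^\star(t):=\sup_{\lambda>0}(\lambda t-\psi(\lambda))$. For a probability measure $\mu$ and measurable $U$, the Luxemburg norm is $\Vert U\Vert^\mu_\psi:=\inf\{\sigma>0:\mathbf E_\mu[\psi(|U|/\sigma)]\le1\}$ and the Amemiya norm is $\Vert U\Vert^{A,\mu}_\psi:=\inf\{(\mathbf E_\mu[\psi(t|U|)]+1)/t:\ t>0\}$. $[x]_+:=\max\{x,0\}$. *)

theory Defs
  imports "HOL-Probability.Probability"
begin

text \<open>Orlicz functions \<psi> : [0,\<infinity>) \<rightarrow> [0,\<infinity>], modelled as real \<Rightarrow> ennreal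
  (values at negative arguments are irrelevant).\<close>
definition orlicz :: "(real \<Rightarrow> ennreal) \<Rightarrow> bool" where
  "orlicz \<psi> \<longleftrightarrow> \<psi> 0 = 0
     \<and> (\<forall>x y t. 0 \<le> x \<longrightarrow> 0 \<le> y \<longrightarrow> 0 < t \<longrightarrow> t < 1 \<longrightarrow>
           \<psi> (t * x + (1 - t) * y) \<le> ennreal t * \<psi> x + ennreal (1 - t) * \<psi> y)
     \<and> (\<exists>x>0. \<psi> x \<noteq> 0)
     \<and> (\<exists>x>0. \<psi> x \<noteq> \<infinity>)"

definition orlicz_conj :: "(real \<Rightarrow> ennreal) \<Rightarrow> real \<Rightarrow> ennreal" where
  "orlicz_conj \<psi> t = e2ennreal (SUP l\<in>{0<..}. ereal (l * t) - enn2ereal (\<psi> l))"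

definition orlicz_app :: "(real \<Rightarrow> ennreal) \<Rightarrow> ennreal \<Rightarrow> ennreal" where
  "orlicz_app \<psi> x = (if x = \<infinity> then \<infinity> else \<psi> (enn2real x))"

text \<open>Luxemburg norm of |U| (U given as its absolute value, possibly \<infinity>).\<close>
definition luxemburg :: "'a measure \<Rightarrow> (real \<Rightarrow> ennreal) \<Rightarrow> ('a \<Rightarrow> ennreal) \<Rightarrow> ennreal" where
  "luxemburg \<mu> \<psi> U = Inf {ennreal \<sigma> | \<sigma>. \<sigma> > 0 \<and>
       (\<integral>\<^sup>+ x. orlicz_app \<psi> (U x / ennreal \<sigma>) \<partial>\<mu>) \<le> 1}"

definition amemiya :: "'a measure \<Rightarrow> (real \<Rightarrow> ennreal) \<Rightarrow> ('a \<Rightarrow> ennreal) \<Rightarrow> ennreal" where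
  "amemiya \<mu> \<psi> U = Inf {((\<integral>\<^sup>+ x. orlicz_app \<psi> (ennreal t * U x) \<partial>\<mu>) + 1) / ennreal t | t. t > 0}"

end

theory Submission
  imports Defs
begin

lemma orlicz_scale:
  assumes "orlicz \<phi>" "0 \<le> x" "0 \<le> t" "t \<le> 1"
  shows "\<phi> (t * x) \<le> ennreal t * \<phi> x"
proof (cases "t = 0 \<or> t = 1")
  case True
  then show ?thesis using assms by (auto simp: orlicz_def)
next
  case False
  then have "0 < t" "t < 1" using assms by auto
  with assms have "\<phi> (t * x + (1 - t) * 0) \<le> ennreal t * \<phi> x + ennreal (1 - t) * \<phi> 0"
    unfolding orlicz_def by blast
  then show ?thesis using assms(1) by (simp add: orlicz_def)
qed

lemma orlicz_mono:
  assumes "orlicz \<phi>" "0 \<le> x" "x \<le> y"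
  shows "\<phi> x \<le> \<phi> y"
proof (cases "y = 0")
  case True then show ?thesis using assms by simp
next
  case False
  then have y: "y > 0" using assms by simp
  have "\<phi> ((x / y) * y) \<le> ennreal (x/y) * \<phi> y"
    using orlicz_scale[OF assms(1), of y "x/y"] assms y by simp
  also have "\<dots> \<le> \<phi> y"
  proof -
    have "ennreal (x/y) \<le> 1" using assms y by (simp add: ennreal_le_1)
    then have "ennreal (x/y) * \<phi> y \<le> 1 * \<phi> y" by (rule mult_right_mono) simp
    then show ?thesis by simp
  qed
  finally show ?thesis using y by simp
qed

lemma mono_ennreal_measurable:
  fixes g :: "ennreal \<Rightarrow> ennreal"
  assumes "mono g"
  shows "g \<in> borel_measurable borel"
proof (rule borel_measurableI_greater)
  fix y
  define S where "S = {x. y < g x}"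
  define a where "a = Inf S"
  have "S = {a..} \<or> S = {a<..}"
  proof (cases "a \<in> S")
    case True
    have "S = {a..}"
    proof
      show "S \<subseteq> {a..}" unfolding a_def by (auto intro: Inf_lower)
      show "{a..} \<subseteq> S" using True assms unfolding S_def
        by (auto dest: monoD[of g] intro: less_le_trans)
    qed
    then show ?thesis ..
  next
    case False
    have "S = {a<..}"
    proof
      show "S \<subseteq> {a<..}"
      proof
        fix x assume "x \<in> S"
        then have "a \<le> x" "a \<noteq> x" using False unfolding a_def by (auto intro: Inf_lower)
        then show "x \<in> {a<..}" by auto
      qed
      show "{a<..} \<subseteq> S"
      proof
        fix x assume "x \<in> {a<..}"
        then have "Inf S < x" by (simp add: a_def)
        then obtain s where "s \<in> S" "s < x" by (auto simp: Inf_less_iff)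
        then show "x \<in> S" using assms unfolding S_def
          by (auto dest: monoD[of g, of s x] intro: less_le_trans)
      qed
    qed
    then show ?thesis ..
  qed
  then show "{x \<in> space borel. y < g x} \<in> sets borel"
  proof -
    have eq: "{x \<in> space borel. y < g x} = S" by (simp add: S_def)
    have "{a..} \<in> sets borel" "{a<..} \<in> sets borel" by auto
    with \<open>S = {a..} \<or> S = {a<..}\<close> show ?thesis unfolding eq by metis
  qed
qed

lemma orlicz_app_mono:
  assumes "orlicz \<phi>"
  shows "mono (orlicz_app \<phi>)"
proof
  fix x y :: ennreal assume "x \<le> y"
  then show "orlicz_app \<phi> x \<le> orlicz_app \<phi> y"
    using assms
    by (cases x; cases y) (auto simp: orlicz_app_def top_unique intro!: orlicz_mono)
qed

lemma orlicz_app_measurable[measurable]: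
  assumes "orlicz \<phi>"
  shows "orlicz_app \<phi> \<in> borel_measurable borel"
  by (rule mono_ennreal_measurable[OF orlicz_app_mono[OF assms]])

lemma young:
  fixes u v :: ennreal
  assumes "orlicz \<phi>"
  shows "u * v \<le> orlicz_app \<phi> u + orlicz_app (orlicz_conj \<phi>) v"
proof (cases "u = \<infinity> \<or> v = \<infinity> \<or> u = 0")
  case True
  then show ?thesis by (auto simp: orlicz_app_def)
next
  case False
  then obtain a b where ab: "u = ennreal a" "v = ennreal b" "a > 0" "b \<ge> 0"
    by (metis ennreal_cases ennreal_0 ennreal_less_zero_iff infinity_ennreal_def
        linorder_not_le order_le_less)
  have "ereal (a * b) - enn2ereal (\<phi> a) \<le> (SUP l\<in>{0<..}. ereal (l * b) - enn2ereal (\<phi> l))"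
    using ab by (intro SUP_upper) auto
  then have c: "e2ennreal (ereal (a * b) - enn2ereal (\<phi> a)) \<le> orlicz_conj \<phi> b"
    unfolding orlicz_conj_def by (rule e2ennreal_mono)
  have "ennreal (a * b) \<le> \<phi> a + e2ennreal (ereal (a * b) - enn2ereal (\<phi> a))"
  proof (cases "\<phi> a = \<infinity>")
    case True then show ?thesis by simp
  next
    case False
    then obtain p where p: "\<phi> a = ennreal p" "p \<ge> 0"
      by (metis ennreal_cases infinity_ennreal_def)
    have "ereal (a*b) - enn2ereal (\<phi> a) = ereal (a*b - p)" using p by simp
    then show ?thesis using p
      by (cases "a*b - p \<ge> 0") (auto simp: ennreal_plus[symmetric] ennreal_neg ennreal_leI)
  qed
  also have "\<dots> \<le> \<phi> a + orlicz_conj \<phi> b" using c by (rule add_left_mono)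
  finally show ?thesis using ab by (simp add: orlicz_app_def ennreal_mult)
qed

lemma ennL0: fixes h a b :: ennreal shows "a \<noteq> \<top> \<Longrightarrow> h \<le> a+b \<Longrightarrow> h - a \<le> b"
  by (simp add: ennreal_minus_le_iff)
lemma ennL1: fixes h a b c :: ennreal shows "c \<noteq> 0 \<Longrightarrow> c \<noteq> \<top> \<Longrightarrow> c*a \<noteq> \<top> \<Longrightarrow> h \<le> c*(a+b) \<Longrightarrow> (h - c*a)/c \<le> b"
  by (metis ennL0 Rings.ring_distribs(1) divide_le_posI_ennreal not_gr_zero)
lemma ennL2: fixes h a c :: ennreal shows "c \<noteq> 0 \<Longrightarrow> c \<noteq> \<top> \<Longrightarrow> c*a \<noteq> \<top> \<Longrightarrow> h \<le> c*a + c*((h - c*a)/c)"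
  by (metis Groups.mult_ac(2) add_diff_eq_iff_ennreal add_diff_self_ennreal
    ennreal_minus_le_iff ennreal_times_divide mult_divide_eq_ennreal)
lemma ennL3: fixes u v :: ennreal and s t :: real shows "s > 0 \<Longrightarrow> t > 0 \<Longrightarrow> u * v = ennreal (s/t) * ((u / ennreal s) * (ennreal t * v))"
  by (smt (verit) divide_ennreal ennreal_divide_times ennreal_eq_0_iff
    ennreal_mult_divide_eq ennreal_neq_top mult.commute mult.left_commute)
lemma ennL4: fixes X :: ennreal and s t :: real shows "s > 0 \<Longrightarrow> t > 0 \<Longrightarrow> ennreal (s/t) * X = ennreal s * (X / ennreal t)"
  by (smt (verit) divide_ennreal ennreal_divide_times)

lemma holder_core:
  assumes phi: "orlicz \<phi>"
    and Um[measurable]: "U \<in> borel_measurable M" and Hm[measurable]: "H \<in> borel_measurable M"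
    and HUV: "\<And>x. x \<in> space M \<Longrightarrow> H x \<le> U x * V x"
    and s: "\<sigma> > 0" and Is: "(\<integral>\<^sup>+x. orlicz_app \<phi> (U x / ennreal \<sigma>) \<partial>M) \<le> 1"
    and t: "t > 0"
  shows "(\<integral>\<^sup>+x. H x \<partial>M) \<le> ennreal \<sigma> *
     (((\<integral>\<^sup>+x. orlicz_app (orlicz_conj \<phi>) (ennreal t * V x) \<partial>M) + 1) / ennreal t)"
proof -
  define c where "c = ennreal (\<sigma>/t)"
  define a where "a x = orlicz_app \<phi> (U x / ennreal \<sigma>)" for x
  define b where "b x = orlicz_app (orlicz_conj \<phi>) (ennreal t * V x)" for x
  define d where "d x = (if c * a x = \<top> then 0 else (H x - c * a x) / c)" for x
  have c0: "c \<noteq> 0" "c \<noteq> \<top>" using s t by (auto simp: c_def)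
  have am[measurable]: "a \<in> borel_measurable M" unfolding a_def
    using orlicz_app_measurable[OF phi] by measurable
  have dm[measurable]: "d \<in> borel_measurable M" unfolding d_def by measurable
  have pt: "H x \<le> c * (a x + b x)" if "x \<in> space M" for x
  proof -
    have "H x \<le> U x * V x" using HUV that .
    also have "\<dots> = c * ((U x / ennreal \<sigma>) * (ennreal t * V x))"
      unfolding c_def using s t by (rule ennL3)
    also have "\<dots> \<le> c * (a x + b x)" unfolding a_def b_def
      by (intro mult_left_mono young[OF phi]) auto
    finally show ?thesis .
  qed
  have db: "d x \<le> b x" if "x \<in> space M" for x
    using ennL1[OF c0, of "a x" "H x" "b x"] pt[OF that] by (auto simp: d_def)
  have hd: "H x \<le> c * a x + c * d x" for x
    using ennL2[OF c0, of "a x" "H x"] by (auto simp: d_def)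
  have "(\<integral>\<^sup>+x. H x \<partial>M) \<le> (\<integral>\<^sup>+x. c * a x + c * d x \<partial>M)"
    by (intro nn_integral_mono hd)
  also have "\<dots> = c * (\<integral>\<^sup>+x. a x \<partial>M) + c * (\<integral>\<^sup>+x. d x \<partial>M)"
    by (simp add: nn_integral_add nn_integral_cmult)
  also have "\<dots> \<le> c * 1 + c * (\<integral>\<^sup>+x. b x \<partial>M)"
    using Is db unfolding a_def
    by (intro add_mono mult_left_mono nn_integral_mono) auto
  also have "\<dots> = c * ((\<integral>\<^sup>+x. b x \<partial>M) + 1)" by (simp add: algebra_simps)
  also have "\<dots> = ennreal \<sigma> * (((\<integral>\<^sup>+x. b x \<partial>M) + 1) / ennreal t)"
    unfolding c_def using s t by (rule ennL4)
  finally show ?thesis unfolding b_def .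
qed

lemma le_Inf_mult:
  fixes X C :: ennreal
  assumes "C \<noteq> 0" "C \<noteq> \<top>" "\<And>y. y \<in> A \<Longrightarrow> X \<le> y * C"
  shows "X \<le> Inf A * C"
proof -
  have "X / C \<le> Inf A"
  proof (rule Inf_greatest)
    fix y assume "y \<in> A"
    then show "X / C \<le> y" using assms
      by (metis divide_right_mono_ennreal mult_divide_eq_ennreal)
  qed
  then have "X / C * C \<le> Inf A * C" by (rule mult_right_mono) simp
  moreover have "X / C * C = X" using assms
    by (metis mult_divide_eq_ennreal ennreal_times_divide mult.commute)
  ultimately show ?thesis by simp
qed

lemma conj_finite:
  assumes phi: "orlicz \<phi>"
  shows "\<exists>t0>0. orlicz_conj \<phi> t0 \<noteq> \<top>"
proof -
  obtain x1 where x1: "x1 > 0" "\<phi> x1 \<noteq> 0" using phi unfolding orlicz_def by blast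
  show ?thesis
  proof (cases "\<phi> x1 = \<top>")
    case True
    have "(SUP l\<in>{0<..}. ereal (l * 1) - enn2ereal (\<phi> l)) \<le> ereal x1"
    proof (rule SUP_least)
      fix l :: real assume l: "l \<in> {0<..}"
      show "ereal (l * 1) - enn2ereal (\<phi> l) \<le> ereal x1"
      proof (cases "l < x1")
        case True
        have "ereal l - enn2ereal (\<phi> l) \<le> ereal l"
          using enn2ereal_nonneg[of "\<phi> l"] by (simp add: ereal_diff_le_self)
        moreover have "ereal l \<le> ereal x1" using True by simp
        ultimately show ?thesis by (simp only: mult_1_right)
      next
        case False
        then have "\<phi> l = \<top>" using orlicz_mono[OF phi, of x1 l] x1 \<open>\<phi> x1 = \<top>\<close>
          by (simp add: top_unique)
        then show ?thesis by simp
      qed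
    qed
    then have "e2ennreal (SUP l\<in>{0<..}. ereal (l * 1) - enn2ereal (\<phi> l)) \<le> e2ennreal (ereal x1)"
      by (rule e2ennreal_mono)
    then have "orlicz_conj \<phi> 1 \<le> ennreal x1" unfolding orlicz_conj_def by simp
    then show ?thesis by (intro exI[of _ 1]) (auto simp: top_unique)
  next
    case False
    then obtain p where p: "\<phi> x1 = ennreal p" "p > 0" using x1
      by (metis ennreal_cases ennreal_less_zero_iff gr_zeroI infinity_ennreal_def)
    define t0 where "t0 = p / x1"
    have t0: "t0 > 0" using p x1 by (simp add: t0_def)
    have "(SUP l\<in>{0<..}. ereal (l * t0) - enn2ereal (\<phi> l)) \<le> ereal p"
    proof (rule SUP_least)
      fix l :: real assume l: "l \<in> {0<..}"
      show "ereal (l * t0) - enn2ereal (\<phi> l) \<le> ereal p"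
      proof (cases "l \<le> x1")
        case True
        have "ereal (l * t0) - enn2ereal (\<phi> l) \<le> ereal (l * t0)"
          using enn2ereal_nonneg[of "\<phi> l"] by (simp add: ereal_diff_le_self)
        also have "l * t0 \<le> x1 * t0" using True t0 by (intro mult_right_mono) auto
        then have "ereal (l * t0) \<le> ereal p" using x1 by (simp add: t0_def)
        finally show ?thesis .
      next
        case False
        then have l1: "l > x1" "l > 0" using x1 by auto
        have "\<phi> ((x1 / l) * l) \<le> ennreal (x1 / l) * \<phi> l"
          using orlicz_scale[OF phi, of l "x1/l"] l1 x1 by simp
        then have "ennreal p \<le> ennreal (x1 / l) * \<phi> l" using p l1 by simp
        then have "ennreal (l/x1) * ennreal p \<le> ennreal (l/x1) * (ennreal (x1 / l) * \<phi> l)"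
          by (rule mult_left_mono) simp
        also have "\<dots> = \<phi> l" using l1 x1
          by (simp add: mult.assoc[symmetric] ennreal_mult[symmetric])
        finally have "ennreal (l * t0) \<le> \<phi> l" using l1 x1 p
          by (simp add: ennreal_mult[symmetric] t0_def)
        then have "ereal (l * t0) \<le> enn2ereal (\<phi> l)"
          using l1 t0 by (simp add: less_eq_ennreal.rep_eq)
        then have "ereal (l * t0) - enn2ereal (\<phi> l) \<le> 0"
          using ereal_diff_nonpos by fastforce
        moreover have "(0::ereal) \<le> ereal p" using p by simp
        ultimately show ?thesis by (rule order.trans)
      qed
    qed
    then have "e2ennreal (SUP l\<in>{0<..}. ereal (l * t0) - enn2ereal (\<phi> l)) \<le> e2ennreal (ereal p)"
      by (rule e2ennreal_mono)
    then have "orlicz_conj \<phi> t0 \<le> ennreal p" unfolding orlicz_conj_def by simp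
    then show ?thesis using t0 by (intro exI[of _ t0]) (auto simp: top_unique)
  qed
qed

lemma amem_bound:
  assumes phi: "orlicz \<phi>"
    and Um[measurable]: "U \<in> borel_measurable M" and Hm[measurable]: "H \<in> borel_measurable M"
    and HUV: "\<And>x. x \<in> space M \<Longrightarrow> H x \<le> U x * V x"
    and y: "y \<in> {ennreal \<sigma> | \<sigma>. \<sigma> > 0 \<and> (\<integral>\<^sup>+x. orlicz_app \<phi> (U x / ennreal \<sigma>) \<partial>M) \<le> 1}"
  shows "(\<integral>\<^sup>+x. H x \<partial>M) \<le> y * amemiya M (orlicz_conj \<phi>) V"
proof -
  obtain \<sigma> where s: "y = ennreal \<sigma>" "\<sigma> > 0" "(\<integral>\<^sup>+x. orlicz_app \<phi> (U x / ennreal \<sigma>) \<partial>M) \<le> 1"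
    using y by blast
  have "(\<integral>\<^sup>+x. H x \<partial>M) \<le> amemiya M (orlicz_conj \<phi>) V * ennreal \<sigma>"
    unfolding amemiya_def
  proof (rule le_Inf_mult)
    show "ennreal \<sigma> \<noteq> 0" "ennreal \<sigma> \<noteq> \<top>" using s by auto
    fix B assume "B \<in> {((\<integral>\<^sup>+ x. orlicz_app (orlicz_conj \<phi>) (ennreal t * V x) \<partial>M) + 1) / ennreal t | t. t > 0}"
    then obtain t where t: "t > 0" "B = ((\<integral>\<^sup>+ x. orlicz_app (orlicz_conj \<phi>) (ennreal t * V x) \<partial>M) + 1) / ennreal t"
      by blast
    show "(\<integral>\<^sup>+x. H x \<partial>M) \<le> B * ennreal \<sigma>"
      using holder_core[OF phi Um Hm HUV s(2) s(3) t(1)] t(2) by (simp add: mult.commute)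
  qed
  then show ?thesis using s by (simp add: mult.commute)
qed

lemma holder:
  assumes M: "prob_space M" and phi: "orlicz \<phi>"
    and Um[measurable]: "U \<in> borel_measurable M" and Hm[measurable]: "H \<in> borel_measurable M"
    and HUV: "\<And>x. x \<in> space M \<Longrightarrow> H x \<le> U x * V x"
    and ex: "\<exists>\<sigma>>0. (\<integral>\<^sup>+x. orlicz_app \<phi> (U x / ennreal \<sigma>) \<partial>M) \<le> 1"
  shows "(\<integral>\<^sup>+x. H x \<partial>M) \<le> luxemburg M \<phi> U * amemiya M (orlicz_conj \<phi>) V"
proof -
  define S where "S = {ennreal \<sigma> | \<sigma>. \<sigma> > 0 \<and> (\<integral>\<^sup>+x. orlicz_app \<phi> (U x / ennreal \<sigma>) \<partial>M) \<le> 1}"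
  have lux: "luxemburg M \<phi> U = Inf S" unfolding S_def luxemburg_def ..
  define A where "A = amemiya M (orlicz_conj \<phi>) V"
  have step1: "\<And>y. y \<in> S \<Longrightarrow> (\<integral>\<^sup>+x. H x \<partial>M) \<le> y * A"
    unfolding A_def S_def by (rule amem_bound[OF phi Um Hm HUV])
  obtain \<sigma>0 where s0: "\<sigma>0 > 0" "(\<integral>\<^sup>+x. orlicz_app \<phi> (U x / ennreal \<sigma>0) \<partial>M) \<le> 1"
    using ex by blast
  have s0S: "ennreal \<sigma>0 \<in> S" unfolding S_def using s0 by blast
  show ?thesis
  proof (cases "A = \<top>")
    case Atop: True
    show ?thesis
    proof (cases "Inf S = 0")
      case False
      then show ?thesis using Atop by (simp add: lux A_def[symmetric] ennreal_mult_top)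
    next
      case lux0: True
      obtain t0 where t0: "t0 > 0" "orlicz_conj \<phi> t0 \<noteq> \<top>" using conj_finite[OF phi] by blast
      interpret prob_space M by (rule M)
      define C where "C = (orlicz_conj \<phi> t0 + 1) / ennreal t0"
      have C: "C \<noteq> 0" "C \<noteq> \<top>" using t0 by (auto simp: C_def ennreal_divide_eq_top_iff)
      have intC: "(\<integral>\<^sup>+ x. orlicz_app (orlicz_conj \<phi>) (ennreal t0 * 1) \<partial>M) = orlicz_conj \<phi> t0"
        using t0 by (simp add: orlicz_app_def emeasure_space_1)
      have "(\<integral>\<^sup>+x. U x \<partial>M) \<le> Inf S * C"
      proof (rule le_Inf_mult[OF C])
        fix y assume "y \<in> S"
        then obtain \<sigma> where s: "y = ennreal \<sigma>" "\<sigma> > 0" "(\<integral>\<^sup>+x. orlicz_app \<phi> (U x / ennreal \<sigma>) \<partial>M) \<le> 1"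
          unfolding S_def by blast
        have "(\<integral>\<^sup>+x. U x \<partial>M) \<le> ennreal \<sigma> * (((\<integral>\<^sup>+ x. orlicz_app (orlicz_conj \<phi>) (ennreal t0 * 1) \<partial>M) + 1) / ennreal t0)"
          by (rule holder_core[OF phi Um Um _ s(2) s(3) t0(1)]) simp
        then show "(\<integral>\<^sup>+x. U x \<partial>M) \<le> y * C" using s intC by (simp add: C_def)
      qed
      then have "(\<integral>\<^sup>+x. U x \<partial>M) = 0" using lux0 by simp
      then have "AE x in M. U x = 0" using nn_integral_0_iff_AE[OF Um] by simp
      then have "AE x in M. H x = 0"
      proof (rule AE_mp)
        show "AE x in M. U x = 0 \<longrightarrow> H x = 0"
          using HUV by (intro AE_I2) (metis le_zero_eq mult_zero_left)
      qed
      then have "(\<integral>\<^sup>+x. H x \<partial>M) = 0" using nn_integral_0_iff_AE[OF Hm] by simp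
      then show ?thesis by simp
    qed
  next
    case Afin: False
    show ?thesis
    proof (cases "A = 0")
      case True
      then show ?thesis using step1[OF s0S] by (simp add: A_def)
    next
      case False
      have "(\<integral>\<^sup>+x. H x \<partial>M) \<le> Inf S * A"
        by (rule le_Inf_mult[OF False Afin step1])
      then show ?thesis by (simp add: lux A_def)
    qed
  qed
qed

lemma ex_bounded:
  assumes M: "prob_space M" and phi: "orlicz \<phi>" and c: "c > 0"
    and bnd: "\<And>x. x \<in> space M \<Longrightarrow> U x \<le> ennreal c"
  shows "\<exists>\<sigma>>0. (\<integral>\<^sup>+x. orlicz_app \<phi> (U x / ennreal \<sigma>) \<partial>M) \<le> 1"
proof -
  interpret prob_space M by (rule M)
  obtain x0 where x0: "x0 > 0" "\<phi> x0 \<noteq> \<top>" using phi unfolding orlicz_def by auto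
  then obtain q where q: "\<phi> x0 = ennreal q" "q \<ge> 0" by (metis ennreal_cases infinity_ennreal_def)
  define l where "l = 1 / (q + 1)"
  have l: "0 < l" "l \<le> 1" "l * q \<le> 1" using q by (auto simp: l_def field_simps)
  have phil: "\<phi> (l * x0) \<le> 1"
  proof -
    have "\<phi> (l * x0) \<le> ennreal l * \<phi> x0" using orlicz_scale[OF phi, of x0 l] x0 l by simp
    also have "\<dots> = ennreal (l * q)" using q l by (simp add: ennreal_mult)
    also have "\<dots> \<le> 1" using l by (simp add: ennreal_le_1)
    finally show ?thesis .
  qed
  define \<sigma> where "\<sigma> = c / (l * x0)"
  have s: "\<sigma> > 0" using c l x0 by (simp add: \<sigma>_def)
  have "(\<integral>\<^sup>+x. orlicz_app \<phi> (U x / ennreal \<sigma>) \<partial>M) \<le> (\<integral>\<^sup>+x. 1 \<partial>M)"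
  proof (rule nn_integral_mono)
    fix x assume x: "x \<in> space M"
    have "U x / ennreal \<sigma> \<le> ennreal c / ennreal \<sigma>" using bnd[OF x] by (rule divide_right_mono_ennreal)
    also have "\<dots> = ennreal (l * x0)" using c s l x0 by (simp add: divide_ennreal \<sigma>_def)
    finally have "orlicz_app \<phi> (U x / ennreal \<sigma>) \<le> orlicz_app \<phi> (ennreal (l * x0))"
      using orlicz_app_mono[OF phi] by (simp add: mono_def)
    also have "\<dots> = \<phi> (l * x0)" using l x0 by (simp add: orlicz_app_def)
    finally show "orlicz_app \<phi> (U x / ennreal \<sigma>) \<le> 1" using phil by simp
  qed
  also have "\<dots> = 1" by (simp add: emeasure_space_1)
  finally show ?thesis using s by blast
qed


lemma lux_indicator_eq:
  assumes "\<sigma> > 0" and phi: "orlicz \<phi>"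
  shows "orlicz_app \<phi> ((indicator A x :: ennreal) / ennreal \<sigma>) = \<phi> (1/\<sigma>) * indicator A x"
proof -
  have "1 / ennreal \<sigma> = ennreal (1/\<sigma>)" using assms by (metis divide_ennreal ennreal_1 zero_le_one)
  then show ?thesis using assms by (auto simp: indicator_def orlicz_app_def orlicz_def)
qed

theorem theorem3:
  fixes MS :: "'s measure" and MW :: "'w measure" and P :: "('s \<times> 'w) measure"
    and L :: "'s \<times> 'w \<Rightarrow> real" and E :: "('s \<times> 'w) set"
    and \<psi> \<phi> :: "real \<Rightarrow> ennreal" and \<gamma> :: real
  assumes PS: "prob_space MS" and PW: "prob_space MW"
    and "distr P MS fst = MS" and "distr P MW snd = MW"
    and "L \<in> borel_measurable (MS \<Otimes>\<^sub>M MW)" and "\<And>x. L x \<ge> 0"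
    and "P = density (MS \<Otimes>\<^sub>M MW) (\<lambda>x. ennreal (L x))"
    and "E \<in> sets (MS \<Otimes>\<^sub>M MW)"
    and "orlicz \<psi>" and "orlicz \<phi>"
  shows "ereal (measure P E)
     \<le> ereal (\<gamma> * measure (MS \<Otimes>\<^sub>M MW) E)
        + enn2ereal (luxemburg MW \<psi> (\<lambda>w. luxemburg MS \<phi> (\<lambda>s. indicator E (s, w)))
            * amemiya MW (orlicz_conj \<psi>)
                (\<lambda>w. amemiya MS (orlicz_conj \<phi>) (\<lambda>s. ennreal (max (L (s, w) - \<gamma>) 0))))"
proof -
  note Lm[measurable] = assms(5) and Em[measurable] = assms(8)
  note psi = assms(9) and phi = assms(10)
  interpret S: prob_space MS by (rule PS)
  interpret W: prob_space MW by (rule PW)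
  interpret SW: pair_prob_space MS MW by unfold_locales
  define Q where "Q = MS \<Otimes>\<^sub>M MW"
  interpret Q: prob_space Q unfolding Q_def by (rule SW.prob_space_axioms)
  define V where "V x = ennreal (max (L x - \<gamma>) 0)" for x
  have Vm[measurable]: "V \<in> borel_measurable Q" unfolding V_def Q_def by measurable
  define f where "f w = luxemburg MS \<phi> (\<lambda>s. indicator E (s, w))" for w
  define g where "g w = amemiya MS (orlicz_conj \<phi>) (\<lambda>s. V (s, w))" for w
  define h where "h w = (\<integral>\<^sup>+s. indicator E (s, w) * V (s, w) \<partial>MS)" for w
  have hm[measurable]: "h \<in> borel_measurable MW"
    unfolding h_def using Vm unfolding Q_def by measurable
  define F where "F m = Inf {ennreal \<sigma> | \<sigma>. \<sigma> > 0 \<and> \<phi> (1/\<sigma>) * m \<le> 1}" for m :: ennreal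
  have Fmono: "mono F"
  proof
    fix m m' :: ennreal assume "m \<le> m'"
    then have "{ennreal \<sigma> | \<sigma>. \<sigma> > 0 \<and> \<phi> (1/\<sigma>) * m' \<le> 1} \<subseteq> {ennreal \<sigma> | \<sigma>. \<sigma> > 0 \<and> \<phi> (1/\<sigma>) * m \<le> 1}"
      by (auto intro!: order_trans[OF mult_left_mono])
    then show "F m \<le> F m'" unfolding F_def by (rule Inf_superset_mono)
  qed
  have fF: "f w = F (\<integral>\<^sup>+s. indicator E (s, w) \<partial>MS)" if w: "w \<in> space MW" for w
  proof -
    have "(\<integral>\<^sup>+s. orlicz_app \<phi> ((indicator E (s, w) :: ennreal) / ennreal \<sigma>) \<partial>MS)
        = \<phi> (1/\<sigma>) * (\<integral>\<^sup>+s. indicator E (s, w) \<partial>MS)" if "\<sigma> > 0" for \<sigma>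
      using that w by (simp add: lux_indicator_eq[OF _ phi] nn_integral_cmult)
    note eq = this
    show ?thesis unfolding f_def F_def luxemburg_def
    proof (intro arg_cong[where f = Inf] Collect_cong iffI)
      fix y
      assume "\<exists>\<sigma>. y = ennreal \<sigma> \<and> 0 < \<sigma> \<and> (\<integral>\<^sup>+ x. orlicz_app \<phi> (indicator E (x, w) / ennreal \<sigma>) \<partial>MS) \<le> 1"
      then show "\<exists>\<sigma>. y = ennreal \<sigma> \<and> 0 < \<sigma> \<and> \<phi> (1/\<sigma>) * (\<integral>\<^sup>+s. indicator E (s, w) \<partial>MS) \<le> 1"
        using eq by metis
    next
      fix y
      assume "\<exists>\<sigma>. y = ennreal \<sigma> \<and> 0 < \<sigma> \<and> \<phi> (1/\<sigma>) * (\<integral>\<^sup>+s. indicator E (s, w) \<partial>MS) \<le> 1"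
      then show "\<exists>\<sigma>. y = ennreal \<sigma> \<and> 0 < \<sigma> \<and> (\<integral>\<^sup>+ x. orlicz_app \<phi> (indicator E (x, w) / ennreal \<sigma>) \<partial>MS) \<le> 1"
        using eq by metis
    qed
  qed
  have fm[measurable]: "f \<in> borel_measurable MW"
  proof -
    have "(\<lambda>w. F (\<integral>\<^sup>+s. indicator E (s, w) \<partial>MS)) \<in> borel_measurable MW"
      using mono_ennreal_measurable[OF Fmono] by measurable
    then show ?thesis using fF by (subst measurable_cong) auto
  qed
  obtain \<sigma>1 where s1: "\<sigma>1 > 0" "(\<integral>\<^sup>+s. orlicz_app \<phi> ((\<lambda>_. 1) s / ennreal \<sigma>1) \<partial>MS) \<le> 1"
    using ex_bounded[OF PS phi, of 1 "\<lambda>_. 1"] by auto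
  have fb: "f w \<le> ennreal \<sigma>1" for w
  proof -
    have "(\<integral>\<^sup>+s. orlicz_app \<phi> ((indicator E (s, w) :: ennreal) / ennreal \<sigma>1) \<partial>MS)
        \<le> (\<integral>\<^sup>+s. orlicz_app \<phi> (1 / ennreal \<sigma>1) \<partial>MS)"
      by (intro nn_integral_mono monoD[OF orlicz_app_mono[OF phi]] divide_right_mono_ennreal)
         (simp add: indicator_def)
    also have "\<dots> \<le> 1" using s1 by simp
    finally show ?thesis unfolding f_def luxemburg_def using s1(1) by (intro Inf_lower) blast
  qed
  have inner: "h w \<le> f w * g w" if w: "w \<in> space MW" for w
    unfolding h_def f_def g_def
  proof (rule holder[OF PS phi])
    show "(\<lambda>s. indicator E (s, w) :: ennreal) \<in> borel_measurable MS" using w by measurable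
    show "(\<lambda>s. indicator E (s, w) * V (s, w)) \<in> borel_measurable MS" using w Vm unfolding Q_def by measurable
    show "\<exists>\<sigma>>0. (\<integral>\<^sup>+x. orlicz_app \<phi> ((indicator E (x, w) :: ennreal) / ennreal \<sigma>) \<partial>MS) \<le> 1"
      by (rule ex_bounded[OF PS phi, of 1]) (auto simp: indicator_def)
  qed simp
  have outer: "(\<integral>\<^sup>+w. h w \<partial>MW) \<le> luxemburg MW \<psi> f * amemiya MW (orlicz_conj \<psi>) g"
  proof (rule holder[OF PW psi fm hm])
    show "h w \<le> f w * g w" if "w \<in> space MW" for w using inner[OF that] .
    show "\<exists>\<sigma>>0. (\<integral>\<^sup>+x. orlicz_app \<psi> (f x / ennreal \<sigma>) \<partial>MW) \<le> 1"
      by (rule ex_bounded[OF PW psi s1(1)]) (rule fb)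
  qed
  define I where "I = (\<integral>\<^sup>+x. indicator E x * V x \<partial>Q)"
  have IVm: "(\<lambda>x. indicator E x * V x) \<in> borel_measurable (MS \<Otimes>\<^sub>M MW)"
    using Vm unfolding Q_def by measurable
  have IF: "I = (\<integral>\<^sup>+w. h w \<partial>MW)" unfolding I_def h_def Q_def
    using SW.nn_integral_snd[OF IVm] by simp
  have Pd: "P = density Q (\<lambda>x. ennreal (L x))" using assms(7) by (simp add: Q_def)
  have sP: "sets P = sets Q" and spP: "space P = space Q" by (simp_all add: Pd)
  have EQ: "E \<in> sets Q" by (simp add: Q_def)
  have fstm: "fst \<in> measurable P MS"
    using measurable_cong_sets[OF sP refl, of MS] by (simp add: Q_def)
  have "emeasure P (space P) = 1"
  proof -
    have "1 = emeasure MS (space MS)" by (simp add: S.emeasure_space_1)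
    also have "\<dots> = emeasure (distr P MS fst) (space MS)" using assms(3) by simp
    also have "\<dots> = emeasure P (fst -` space MS \<inter> space P)"
      by (rule emeasure_distr[OF fstm]) simp
    also have "fst -` space MS \<inter> space P = space P" by (auto simp: spP Q_def space_pair_measure)
    finally show ?thesis by simp
  qed
  moreover have "emeasure P E \<le> emeasure P (space P)"
    using EQ sP by (intro emeasure_mono) (auto dest: sets.sets_into_space)
  ultimately have Pfin: "emeasure P E \<noteq> \<top>" by (auto simp: top_unique)
  have PE: "ennreal (measure P E) = (\<integral>\<^sup>+x. ennreal (L x) * indicator E x \<partial>Q)"
    using emeasure_eq_ennreal_measure[OF Pfin] emeasure_density[of "\<lambda>x. ennreal (L x)" Q E] EQ
    by (simp add: Pd Q_def)
  have QE: "emeasure Q E = ennreal (measure Q E)" by (rule Q.emeasure_eq_measure)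
  have mQ: "measure Q E \<ge> 0" by simp
  have mP: "measure P E \<ge> 0" by simp
  have key: "ereal (measure P E) \<le> ereal (\<gamma> * measure Q E) + enn2ereal I"
  proof (cases "\<gamma> \<ge> 0")
    case True
    have "ennreal (measure P E) \<le> (\<integral>\<^sup>+x. ennreal \<gamma> * indicator E x + indicator E x * V x \<partial>Q)"
      unfolding PE
    proof (rule nn_integral_mono)
      fix x
      have "ennreal (L x) \<le> ennreal \<gamma> + V x"
      proof (cases "L x \<ge> \<gamma>")
        case True2: True
        then have "L x = \<gamma> + max (L x - \<gamma>) 0" by simp
        then show ?thesis using True True2 unfolding V_def
          by (metis ennreal_plus max.cobounded2 order_refl)
      next
        case False
        then have "ennreal (L x) \<le> ennreal \<gamma>" by (simp add: ennreal_leI)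
        also have "\<dots> \<le> ennreal \<gamma> + V x" by simp
        finally show ?thesis .
      qed
      then show "ennreal (L x) * indicator E x \<le> ennreal \<gamma> * indicator E x + indicator E x * V x"
        by (auto simp: indicator_def)
    qed
    also have "\<dots> = ennreal \<gamma> * emeasure Q E + I"
      unfolding I_def using EQ IVm
      by (subst nn_integral_add) (auto simp: nn_integral_cmult_indicator Q_def)
    also have "\<dots> = ennreal (\<gamma> * measure Q E) + I" using True mQ by (simp add: QE ennreal_mult)
    finally have "enn2ereal (ennreal (measure P E)) \<le> enn2ereal (ennreal (\<gamma> * measure Q E) + I)"
      by (metis less_eq_ennreal.rep_eq)
    then show ?thesis using True mQ mP by (simp add: plus_ennreal.rep_eq)
  next
    case False
    have "I = (\<integral>\<^sup>+x. ennreal (L x) * indicator E x + ennreal (- \<gamma>) * indicator E x \<partial>Q)"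
      unfolding I_def
    proof (rule nn_integral_cong)
      fix x
      have "V x = ennreal (L x) + ennreal (- \<gamma>)" using False assms(6)[of x]
        by (simp add: V_def ennreal_plus[symmetric] del: ennreal_plus)
      then show "indicator E x * V x = ennreal (L x) * indicator E x + ennreal (- \<gamma>) * indicator E x"
        by (auto simp: indicator_def)
    qed
    also have "\<dots> = ennreal (measure P E) + ennreal (- \<gamma>) * emeasure Q E"
      unfolding PE using EQ Lm
      by (subst nn_integral_add) (auto simp: nn_integral_cmult_indicator Q_def)
    also have "\<dots> = ennreal (measure P E - \<gamma> * measure Q E)"
    proof -
      have "ennreal (- \<gamma>) * emeasure Q E = ennreal (- \<gamma> * measure Q E)"
        using False mQ by (simp add: QE ennreal_mult[symmetric])
      moreover have "ennreal (measure P E) + ennreal (- \<gamma> * measure Q E) = ennreal (measure P E - \<gamma> * measure Q E)"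
        using False mQ mP by (subst ennreal_plus[symmetric]) (auto simp: mult_nonpos_nonneg)
      ultimately show ?thesis by simp
    qed
    moreover have "measure P E - \<gamma> * measure Q E \<ge> 0"
      using False mQ mP mult_nonpos_nonneg[of \<gamma> "measure Q E"] by linarith
    ultimately have "enn2ereal I = ereal (measure P E - \<gamma> * measure Q E)"
      by simp
    then show ?thesis by simp
  qed
  have prodeq: "luxemburg MW \<psi> f * amemiya MW (orlicz_conj \<psi>) g =
      luxemburg MW \<psi> (\<lambda>w. luxemburg MS \<phi> (\<lambda>s. indicator E (s, w)))
            * amemiya MW (orlicz_conj \<psi>)
                (\<lambda>w. amemiya MS (orlicz_conj \<phi>) (\<lambda>s. ennreal (max (L (s, w) - \<gamma>) 0)))"
    by (simp add: f_def[abs_def] g_def[abs_def] V_def[abs_def])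
  have "enn2ereal I \<le> enn2ereal (luxemburg MW \<psi> f * amemiya MW (orlicz_conj \<psi>) g)"
    using outer IF by (metis less_eq_ennreal.rep_eq)
  with key show ?thesis unfolding prodeq[symmetric] Q_def
    by (metis add_left_mono order.trans)
qed
end
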